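(* Let $f(x)=\frac12x^\top Ax-b^\top x$ on $\mathbb{R}^n$, where $A$ is symmetric positive definite with $\mu I\preceq A\preceq LI$, $0<\mu\le L$, and $b\in\mathbb{R}^n$. Consider the SR1 iteration: choose $x_0$, set $G_0=L\cdot I$, and for $k=0,1,\dots$ set $x_{k+1}=x_k-G_k^{-1}\nabla f(x_k)$, $u_k=x_{k+1}-x_k$, $G_{k+1}=\mathrm{SR1}(A,G_k,u_k)$. Then for all $k\ge1$, $$\lambda_f(x_k)\le\left(e^{\frac{n}{k}\ln\frac{L}{\mu}}-1\right)^{k/2}\sqrt{\frac{L}{\mu}}\cdot\lambda_f(x_0).$$
   Context: $\lambda_f(x)=\sqrt{\nabla f(x)^\top A^{-1}\nabla f(x)}$. For symmetric matrices $A,G$ and $u\neq0$, $\mathrm{SR1}(A,G,u)=G$ if $(G-A)u=0$, and otherwise $\mathrm{SR1}(A,G,u)=G-\frac{(G-A)uu^\top(G-A)}{u^\top(G-A)u}$. *)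

theory Defs
  imports "HOL-Analysis.Analysis"
begin

definition quad_f :: "real^'n^'n \<Rightarrow> real^'n \<Rightarrow> real^'n \<Rightarrow> real" where
  "quad_f A b x = (1/2) * (x \<bullet> (A *v x)) - b \<bullet> x"

definition quad_grad :: "real^'n^'n \<Rightarrow> real^'n \<Rightarrow> real^'n \<Rightarrow> real^'n" where
  "quad_grad A b x = A *v x - b"

definition lambda_f :: "real^'n^'n \<Rightarrow> real^'n \<Rightarrow> real^'n \<Rightarrow> real" where
  "lambda_f A b x = sqrt (quad_grad A b x \<bullet> (matrix_inv A *v quad_grad A b x))"

definition outer :: "real^'n \<Rightarrow> real^'n \<Rightarrow> real^'n^'n" where
  "outer v w = (\<chi> i j. v $ i * w $ j)"

definition SR1 :: "real^'n^'n \<Rightarrow> real^'n^'n \<Rightarrow> real^'n \<Rightarrow> real^'n^'n" where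
  "SR1 A G u = (if (G - A) *v u = 0 then G
     else G - (1 / (u \<bullet> ((G - A) *v u))) *\<^sub>R outer ((G - A) *v u) ((G - A) *v u))"

primrec sr1_iter :: "real^'n^'n \<Rightarrow> real^'n \<Rightarrow> real \<Rightarrow> real^'n \<Rightarrow> nat \<Rightarrow> (real^'n) \<times> (real^'n^'n)" where
  "sr1_iter A b L x0 0 = (x0, L *\<^sub>R mat 1)"
| "sr1_iter A b L x0 (Suc k) =
     (let (x, G) = sr1_iter A b L x0 k;
          x' = x - matrix_inv G *v quad_grad A b x
      in (x', SR1 A G (x' - x)))"

end

theory Submission
  imports Defs
begin

lemma sym_inner:
  fixes M :: "real^'n^'n"
  assumes "transpose M = M"
  shows "x \<bullet> (M *v y) = (M *v x) \<bullet> y"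
  by (metis assms dot_lmul_matrix inner_commute transpose_matrix_vector)

lemma outer_mult: "outer v w *v x = (w \<bullet> x) *\<^sub>R v"
  by (simp add: outer_def vec_eq_iff matrix_vector_mult_def inner_vec_def sum_distrib_left mult.commute mult.left_commute)

lemma transpose_outer: "transpose (outer v v) = outer v v"
  by (simp add: outer_def transpose_def vec_eq_iff mult.commute)

lemma inv_props:
  fixes G :: "real^'n^'n"
  assumes "invertible G"
  shows "G *v (matrix_inv G *v y) = y" "matrix_inv G *v (G *v y) = y"
proof -
  have "G ** matrix_inv G = mat 1 \<and> matrix_inv G ** G = mat 1"
    using assms unfolding invertible_def matrix_inv_def by (rule someI_ex)
  then show "G *v (matrix_inv G *v y) = y" "matrix_inv G *v (G *v y) = y"
    by (metis matrix_vector_mul_assoc matrix_vector_mul_lid)+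
qed

lemma pd_invertible:
  fixes G :: "real^'n^'n"
  assumes "\<And>v. v \<noteq> 0 \<Longrightarrow> 0 < v \<bullet> (G *v v)"
  shows "invertible G"
proof -
  have "\<forall>x. G *v x = 0 \<longrightarrow> x = 0" using assms by fastforce
  then show ?thesis using matrix_left_invertible_ker invertible_left_inverse by blast
qed

lemma psd_CS:
  fixes M :: "real^'n^'n"
  assumes sym: "transpose M = M" and psd: "\<And>v. 0 \<le> v \<bullet> (M *v v)"
  shows "(x \<bullet> (M *v y))^2 \<le> (x \<bullet> (M *v x)) * (y \<bullet> (M *v y))"
proof -
  define X where "X = x \<bullet> (M *v x)"
  define Y where "Y = y \<bullet> (M *v y)"
  define B where "B = x \<bullet> (M *v y)"
  have q: "0 \<le> X + 2 * t * B + t^2 * Y" for t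
  proof -
    have "0 \<le> (x + t *\<^sub>R y) \<bullet> (M *v (x + t *\<^sub>R y))" by (rule psd)
    also have "\<dots> = X + t * (x \<bullet> (M *v y)) + t * (y \<bullet> (M *v x)) + t^2 * Y"
      by (simp add: X_def Y_def matrix_vector_right_distrib matrix_vector_mult_scaleR
          inner_add_left inner_add_right algebra_simps power2_eq_square)
    also have "y \<bullet> (M *v x) = B" unfolding B_def
      by (metis sym sym_inner inner_commute)
    finally show ?thesis by (simp add: B_def algebra_simps)
  qed
  have X0: "0 \<le> X" using psd X_def by auto
  have Y0: "0 \<le> Y" using psd Y_def by auto
  show ?thesis
  proof (cases "Y = 0")
    case True
    have "B = 0"
    proof (rule ccontr)
      assume "B \<noteq> 0"
      have "0 \<le> X + 2 * (-(X+1)/(2*B)) * B" using q[of "-(X+1)/(2*B)"] True by simp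
      also have "\<dots> = -1" using \<open>B \<noteq> 0\<close> by (simp add: field_simps)
      finally show False by simp
    qed
    then show ?thesis using X0 Y0 by (simp add: B_def[symmetric] X_def[symmetric] Y_def[symmetric])
  next
    case False
    then have Yp: "Y > 0" using Y0 by simp
    have "0 \<le> X + 2 * (-B/Y) * B + (-B/Y)^2 * Y" by (rule q)
    also have "\<dots> = X - B^2 / Y" using Yp by (simp add: field_simps power2_eq_square)
    finally have "B^2 \<le> X * Y" using Yp by (simp add: field_simps)
    then show ?thesis by (simp add: B_def X_def Y_def)
  qed
qed


lemma scaleR_mat_mult: "((r::real) *\<^sub>R (M::real^'n^'m)) *v v = r *\<^sub>R (M *v v)"
  by (simp add: vec_eq_iff matrix_vector_mult_def sum_distrib_left mult.assoc)

lemma mvneg: "(M::real^'n^'m) *v (- x) = - (M *v x)"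
  by (simp add: vec_eq_iff matrix_vector_mult_def sum_negf)

definition nuq :: "real^'n^'n \<Rightarrow> real^'n \<Rightarrow> real" where
  "nuq G g = g \<bullet> (matrix_inv G *v g)"

definition trinv :: "real^'n^'n \<Rightarrow> real" where
  "trinv G = (\<Sum>j\<in>UNIV. axis j 1 \<bullet> (matrix_inv G *v axis j 1))"

lemma sum_sq_axis: "(\<Sum>j\<in>UNIV. (z \<bullet> axis j (1::real))^2) = z \<bullet> (z::real^'n)"
proof -
  have "(z \<bullet> axis j (1::real))^2 = z$j * z$j" for j by (simp add: inner_axis power2_eq_square)
  then show ?thesis by (simp add: inner_vec_def)
qed

lemma inv_sym:
  fixes G :: "real^'n^'n"
  assumes "invertible G" "transpose G = G"
  shows "(matrix_inv G *v x) \<bullet> y = x \<bullet> (matrix_inv G *v y)"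
proof -
  let ?H = "matrix_inv G"
  have "(?H *v x) \<bullet> y = (?H *v x) \<bullet> (G *v (?H *v y))" using inv_props[OF assms(1)] by simp
  also have "\<dots> = (G *v (?H *v x)) \<bullet> (?H *v y)" using sym_inner[OF assms(2)] by simp
  also have "\<dots> = x \<bullet> (?H *v y)" using inv_props[OF assms(1)] by simp
  finally show ?thesis .
qed

lemma step:
  fixes A G :: "real^'n^'n" and g :: "real^'n"
  assumes symA: "transpose A = A" and mu_pos: "0 < \<mu>"
    and lower: "\<And>v. \<mu> * (v \<bullet> v) \<le> v \<bullet> (A *v v)"
    and symG: "transpose G = G"
    and GA: "\<And>v. v \<bullet> (A *v v) \<le> v \<bullet> (G *v v)"
    and GL: "\<And>v. v \<bullet> (G *v v) \<le> L * (v \<bullet> v)"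
    and u_def: "u = - (matrix_inv G *v g)"
    and G'_def: "G' = SR1 A G u"
  shows "transpose G' = G'"
    "\<And>v. v \<bullet> (A *v v) \<le> v \<bullet> (G' *v v)"
    "\<And>v. v \<bullet> (G' *v v) \<le> L * (v \<bullet> v)"
    "g + A *v u = - ((G - A) *v u)"
    "\<exists>\<theta>\<ge>0. nuq G' (g + A *v u) \<le> \<theta> * nuq G g \<and> \<theta> \<le> L * (trinv G' - trinv G)"
    "\<And>x. (G - A) *v x = 0 \<Longrightarrow> (G' - A) *v x = 0"
    "(G' - A) *v u = 0"
proof -
  let ?H = "matrix_inv G"
  define R where "R = G - A"
  define w where "w = R *v u"
  define c where "c = u \<bullet> w"
  have invG: "invertible G"
  proof (rule pd_invertible)
    fix v :: "real^'n" assume "v \<noteq> 0"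
    then have "0 < \<mu> * (v \<bullet> v)" using mu_pos by simp
    also have "\<dots> \<le> v \<bullet> (G *v v)" using lower[of v] GA[of v] by linarith
    finally show "0 < v \<bullet> (G *v v)" .
  qed
  have symR: "transpose R = R" using symA symG by (simp add: R_def transpose_def vec_eq_iff)
  have psdR: "0 \<le> v \<bullet> (R *v v)" for v using GA[of v] by (simp add: R_def algebra_simps inner_diff_right)
  have Rv: "R *v v = G *v v - A *v v" for v by (simp add: R_def algebra_simps)
  have gG: "g = - (G *v u)" using inv_props[OF invG] u_def by (simp add: mvneg)
  show gw: "g + A *v u = - ((G - A) *v u)" using gG by (simp add: algebra_simps)
  have G'_triv: "w = 0 \<Longrightarrow> G' = G" using G'_def by (simp add: SR1_def w_def R_def)
  have G'_nontriv: "w \<noteq> 0 \<Longrightarrow> G' *v v = G *v v - ((w \<bullet> v) / c) *\<^sub>R w" for v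
  proof -
    assume "w \<noteq> 0"
    then have "G' = G - (1/c) *\<^sub>R outer w w" using G'_def by (simp add: SR1_def w_def R_def c_def)
    then have "G' *v v = G *v v - (1/c) *\<^sub>R (outer w w *v v)"
      by (simp add: matrix_vector_mult_diff_rdistrib scaleR_mat_mult)
    then show ?thesis by (simp add: outer_mult)
  qed
  have Ru: "(G - A) *v u = w" by (simp add: w_def R_def)
  have CSR: "(x \<bullet> (R *v y))^2 \<le> (x \<bullet> (R *v x)) * (y \<bullet> (R *v y))" for x y
    by (rule psd_CS[OF symR psdR])
  have wx: "w \<bullet> x = u \<bullet> (R *v x)" for x
    using sym_inner[OF symR, of u x] w_def by (simp add: inner_commute)
  have c_pos: "0 < c" if wn: "w \<noteq> 0"
  proof -
    have c0: "0 \<le> c" using psdR[of u] by (simp add: c_def w_def)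
    show "0 < c"
    proof (rule ccontr)
      assume "\<not> 0 < c" then have "c = 0" using c0 by simp
      have "(u \<bullet> (R *v w))^2 \<le> c * (w \<bullet> (R *v w))" using CSR[of u w] by (simp add: c_def w_def)
      then have "(w \<bullet> w)^2 \<le> 0" using \<open>c=0\<close> wx[of w] by simp
      then have "w \<bullet> w = 0" by (metis power2_less_eq_zero_iff)
      then show False using wn by simp
    qed
  qed
  have R'psd: "(w \<bullet> v)^2 / c \<le> v \<bullet> (R *v v)" if wn: "w \<noteq> 0" for v
  proof -
    have "(w \<bullet> v)^2 \<le> c * (v \<bullet> (R *v v))" using CSR[of u v] wx[of v] by (simp add: c_def w_def)
    then show ?thesis using c_pos[OF wn] by (simp add: divide_le_eq mult.commute)
  qed
  have G'q: "v \<bullet> (G' *v v) = v \<bullet> (G *v v) - (w \<bullet> v)^2 / c" if wn: "w \<noteq> 0" for v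
    using G'_nontriv[OF wn, of v] by (simp add: inner_diff_right power2_eq_square inner_commute)
  have GA': "v \<bullet> (A *v v) \<le> v \<bullet> (G' *v v)" for v
  proof (cases "w = 0")
    case True then show ?thesis using G'_triv GA by simp
  next
    case False
    have "v \<bullet> (R *v v) = v \<bullet> (G *v v) - v \<bullet> (A *v v)" by (simp add: Rv inner_diff_right)
    then show ?thesis using G'q[OF False, of v] R'psd[OF False, of v] by linarith
  qed
  show "v \<bullet> (A *v v) \<le> v \<bullet> (G' *v v)" for v by (rule GA')
  have G'G: "v \<bullet> (G' *v v) \<le> v \<bullet> (G *v v)" for v
  proof (cases "w = 0")
    case True then show ?thesis using G'_triv by simp
  next
    case False
    have "0 \<le> (w \<bullet> v)^2 / c" using c_pos[OF False] by simp
    then show ?thesis using G'q[OF False, of v] by linarith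
  qed
  show "v \<bullet> (G' *v v) \<le> L * (v \<bullet> v)" for v using G'G[of v] GL[of v] by linarith
  have symG_ij: "G $ i $ j = G $ j $ i" for i j
    using arg_cong[OF symG, of "\<lambda>M. M $ j $ i"] by (simp add: transpose_def)
  show symG': "transpose G' = G'"
  proof (cases "w = 0")
    case True then show ?thesis using G'_triv symG by simp
  next
    case False
    then have "G' = G - (1/c) *\<^sub>R outer w w" using G'_def by (simp add: SR1_def w_def R_def c_def)
    then show ?thesis by (simp add: transpose_def outer_def vec_eq_iff symG_ij mult.commute)
  qed
  show "(G' - A) *v u = 0"
  proof (cases "w = 0")
    case True then show ?thesis using G'_triv Ru by simp
  next
    case False
    have "(G' - A) *v u = G' *v u - A *v u" by (simp add: algebra_simps)
    also have "\<dots> = G *v u - ((w \<bullet> u) / c) *\<^sub>R w - A *v u" using G'_nontriv[OF False] by simp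
    also have "(w \<bullet> u) / c = 1" using c_pos[OF False] by (simp add: c_def inner_commute)
    finally show ?thesis by (simp add: Rv w_def)
  qed
  show "(G' - A) *v x = 0" if hx: "(G - A) *v x = 0" for x
  proof (cases "w = 0")
    case True then show ?thesis using G'_triv hx by simp
  next
    case False
    have "w \<bullet> x = 0" using wx[of x] hx by (simp add: R_def)
    have "(G' - A) *v x = G' *v x - A *v x" by (simp add: algebra_simps)
    also have "\<dots> = G *v x - A *v x" using G'_nontriv[OF False] \<open>w \<bullet> x = 0\<close> by simp
    also have "\<dots> = 0" using hx by (simp add: algebra_simps)
    finally show ?thesis .
  qed
  show "\<exists>\<theta>\<ge>0. nuq G' (g + A *v u) \<le> \<theta> * nuq G g \<and> \<theta> \<le> L * (trinv G' - trinv G)"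
  proof (cases "w = 0")
    case True
    have "nuq G' (g + A *v u) = 0" using gw Ru True by (simp add: nuq_def)
    then show ?thesis using G'_triv True by (intro exI[of _ 0]) simp
  next
    case False
    note cp = c_pos[OF False]
    have invG': "invertible G'"
    proof (rule pd_invertible)
      fix v :: "real^'n" assume "v \<noteq> 0"
      then have "0 < \<mu> * (v \<bullet> v)" using mu_pos by simp
      also have "\<dots> \<le> v \<bullet> (G' *v v)" using lower[of v] GA'[of v] by linarith
      finally show "0 < v \<bullet> (G' *v v)" .
    qed
    define z where "z = ?H *v w"
    define a where "a = w \<bullet> z"
    have Gz: "G *v z = w" using inv_props[OF invG] z_def by simp
    have zn: "z \<noteq> 0" using Gz False by auto
    have a_eq: "a = z \<bullet> (G *v z)" using Gz by (simp add: a_def inner_commute)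
    have a_pos: "0 < a"
    proof -
      have "0 < \<mu> * (z \<bullet> z)" using mu_pos zn by simp
      also have "\<dots> \<le> z \<bullet> (G *v z)" using lower[of z] GA[of z] by linarith
      finally show ?thesis using a_eq by simp
    qed
    have zG'z: "z \<bullet> (G' *v z) = a - a^2 / c" using G'q[OF False, of z] a_eq by (simp add: a_def inner_commute)
    have "0 < z \<bullet> (G' *v z)"
    proof -
      have "0 < \<mu> * (z \<bullet> z)" using mu_pos zn by simp
      also have "\<dots> \<le> z \<bullet> (G' *v z)" using lower[of z] GA'[of z] by linarith
      finally show ?thesis .
    qed
    then have "0 < a - a^2 / c" using zG'z by simp
    then have "0 < (a * (c - a)) / c" using cp by (simp add: field_simps power2_eq_square)
    then have ca: "0 < c - a" using cp a_pos by (simp add: zero_less_divide_iff zero_less_mult_iff)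
    have H'y: "matrix_inv G' *v y = ?H *v y + ((z \<bullet> y) / (c - a)) *\<^sub>R z" for y
    proof -
      have zy: "z \<bullet> y = w \<bullet> (?H *v y)" using inv_sym[OF invG symG, of w y] z_def by simp
      have "G' *v (?H *v y + ((z \<bullet> y) / (c - a)) *\<^sub>R z)
          = G' *v (?H *v y) + ((z \<bullet> y) / (c - a)) *\<^sub>R (G' *v z)"
        by (simp add: algebra_simps)
      also have "G' *v (?H *v y) = y - ((w \<bullet> (?H *v y)) / c) *\<^sub>R w"
        using G'_nontriv[OF False] inv_props[OF invG] by simp
      also have "G' *v z = w - (a / c) *\<^sub>R w"
        using G'_nontriv[OF False] Gz by (simp add: a_def)
      also have "w - (a / c) *\<^sub>R w = ((c - a) / c) *\<^sub>R w"
      proof -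
        have "(c - a) / c = 1 - a / c" using cp by (simp add: field_simps)
        then show ?thesis by (simp add: scaleR_diff_left)
      qed
      finally have "G' *v (?H *v y + ((z \<bullet> y) / (c - a)) *\<^sub>R z) = y"
        using ca zy by (simp add: scaleR_scaleR)
      then show ?thesis using inv_props(2)[OF invG', of "?H *v y + ((z \<bullet> y) / (c - a)) *\<^sub>R z"] by simp
    qed
    define \<theta> where "\<theta> = a / (c - a)"
    have th0: "0 \<le> \<theta>" using a_pos ca by (simp add: \<theta>_def)
    have nu': "nuq G' (g + A *v u) = \<theta> * c"
    proof -
      have "nuq G' (g + A *v u) = w \<bullet> (matrix_inv G' *v w)"
        using gw Ru by (simp add: nuq_def mvneg)
      also have "\<dots> = a + (a * a) / (c - a)" using H'y[of w] z_def by (simp add: inner_add_right a_def inner_commute)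
      also have "\<dots> = \<theta> * c" using ca by (simp add: \<theta>_def field_simps)
      finally show ?thesis .
    qed
    have nu: "c \<le> nuq G g"
    proof -
      have "nuq G g = u \<bullet> (G *v u)" using u_def gG by (simp add: nuq_def mvneg inner_commute)
      moreover have "c = u \<bullet> (G *v u) - u \<bullet> (A *v u)" by (simp add: c_def w_def Rv inner_diff_right)
      moreover have "0 \<le> u \<bullet> (A *v u)" using lower[of u] mu_pos
        by (meson inner_ge_zero mult_nonneg_nonneg order_trans less_imp_le)
      ultimately show ?thesis by linarith
    qed
    have tr: "trinv G' - trinv G = (z \<bullet> z) / (c - a)"
    proof -
      have "trinv G' = (\<Sum>j\<in>UNIV. axis j 1 \<bullet> (?H *v axis j 1) + (z \<bullet> axis j 1)^2 / (c - a))"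
        unfolding trinv_def H'y by (simp add: inner_add_right power2_eq_square inner_commute)
      also have "\<dots> = trinv G + (\<Sum>j\<in>UNIV. (z \<bullet> axis j 1)^2) / (c - a)"
        by (simp add: sum.distrib trinv_def sum_divide_distrib)
      finally show ?thesis by (simp add: sum_sq_axis)
    qed
    have "a \<le> L * (z \<bullet> z)" using a_eq GL[of z] by simp
    then have th_le: "\<theta> \<le> L * (trinv G' - trinv G)" using ca
      by (simp add: tr \<theta>_def divide_right_mono)
    show ?thesis
    proof (intro exI[of _ \<theta>] conjI th0 th_le)
      show "nuq G' (g + A *v u) \<le> \<theta> * nuq G g" using nu' nu th0 by (simp add: mult_left_mono)
    qed
  qed
qed


definition xs where "xs A b L x0 k = fst (sr1_iter A b L x0 k)"
definition Gs where "Gs A b L x0 k = snd (sr1_iter A b L x0 k)"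
definition gs where "gs A b L x0 k = quad_grad A b (xs A b L x0 k)"

lemma iter_Suc:
  "xs A b L x0 (Suc k) = xs A b L x0 k + (- (matrix_inv (Gs A b L x0 k) *v gs A b L x0 k))"
  "Gs A b L x0 (Suc k) = SR1 A (Gs A b L x0 k) (- (matrix_inv (Gs A b L x0 k) *v gs A b L x0 k))"
  "gs A b L x0 (Suc k) = gs A b L x0 k + A *v (- (matrix_inv (Gs A b L x0 k) *v gs A b L x0 k))"
  by (simp_all add: xs_def Gs_def gs_def split_def Let_def quad_grad_def algebra_simps)

lemma iter_0: "xs A b L x0 0 = x0" "Gs A b L x0 0 = L *\<^sub>R mat 1"
  by (simp_all add: xs_def Gs_def)

lemma inv_quad_bound:
  fixes M :: "real^'n^'n"
  assumes inv: "invertible M" and mu_pos: "0 < \<mu>" and low: "\<And>v. \<mu> * (v \<bullet> v) \<le> v \<bullet> (M *v v)"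
  shows "e \<bullet> (matrix_inv M *v e) \<le> (e \<bullet> e) / \<mu>"
proof -
  define y where "y = matrix_inv M *v e"
  have My: "M *v y = e" using inv_props[OF inv] y_def by simp
  define s where "s = y \<bullet> e"
  have s1: "\<mu> * (y \<bullet> y) \<le> s" using low[of y] My by (simp add: s_def)
  have "0 \<le> \<mu> * (y \<bullet> y)" using mu_pos by simp
  then have s0: "0 \<le> s" using s1 by linarith
  have yy: "y \<bullet> y \<le> s / \<mu>" using s1 mu_pos by (simp add: pos_le_divide_eq mult.commute)
  have "s^2 \<le> (y \<bullet> y) * (e \<bullet> e)" using Cauchy_Schwarz_ineq[of y e] by (simp add: s_def)
  also have "\<dots> \<le> (s / \<mu>) * (e \<bullet> e)"
    using yy by (rule mult_right_mono) simp
  finally have h: "s * s \<le> s * ((e \<bullet> e) / \<mu>)" by (simp add: power2_eq_square)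
  have "s \<le> (e \<bullet> e) / \<mu>"
  proof (cases "s = 0")
    case True then show ?thesis using mu_pos by simp
  next
    case False
    then have "0 < s" using s0 by simp
    then show ?thesis using h mult_le_cancel_left_pos by blast
  qed
  then show ?thesis by (simp add: s_def y_def inner_commute)
qed

lemma sq_bound:
  fixes M :: "real^'n^'n"
  assumes sym: "transpose M = M" and psd: "\<And>v. 0 \<le> v \<bullet> (M *v v)"
    and up: "\<And>v. v \<bullet> (M *v v) \<le> L * (v \<bullet> v)" and L0: "0 \<le> L"
  shows "(M *v h) \<bullet> (M *v h) \<le> L * (h \<bullet> (M *v h))"
proof -
  define x where "x = M *v h"
  have "(h \<bullet> (M *v x))^2 \<le> (h \<bullet> (M *v h)) * (x \<bullet> (M *v x))" by (rule psd_CS[OF sym psd])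
  also have "\<dots> \<le> (h \<bullet> (M *v h)) * (L * (x \<bullet> x))" using psd[of h] up[of x] by (intro mult_left_mono)
  finally have h1: "(x \<bullet> x) * (x \<bullet> x) \<le> (x \<bullet> x) * (L * (h \<bullet> (M *v h)))"
    using sym_inner[OF sym, of h x] by (simp add: x_def power2_eq_square mult_ac)
  show ?thesis
  proof (cases "x \<bullet> x = 0")
    case True then show ?thesis using psd[of h] L0 x_def by simp
  next
    case False then have "0 < x \<bullet> x" by (simp add: order_less_le)
    then show ?thesis using h1 x_def by (simp add: mult_le_cancel_left_pos)
  qed
qed

lemma bernoulli_powr:
  fixes \<rho> p :: real
  assumes "0 < \<rho>" "1 \<le> p"
  shows "p * (\<rho> - 1) \<le> \<rho> powr p - 1"
proof -
  have "p * (\<rho> - 1) \<le> \<rho> powr p - 1 powr p"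
  proof (rule convex_on_imp_above_tangent[OF powr_convex[OF assms(2)]])
    show "connected {0::real<..}" by simp
    show "(1::real) \<in> interior {0<..}" by (simp add: interior_open)
    show "\<rho> \<in> {0<..}" using assms by simp
    have "((\<lambda>z. z powr p) has_real_derivative p * 1 powr (p - 1)) (at 1)"
      by (rule has_real_derivative_powr) simp
    then show "((\<lambda>z. z powr p) has_real_derivative p) (at 1 within {0<..})"
      by (simp add: has_field_derivative_at_within)
  qed
  then show ?thesis by simp
qed

lemma amgm_pow:
  fixes \<theta> :: "nat \<Rightarrow> real"
  assumes "1 \<le> k" "\<And>i. i < k \<Longrightarrow> 0 \<le> \<theta> i"
  shows "(\<Prod>i<k. \<theta> i) \<le> ((\<Sum>i<k. \<theta> i) / k)^k"
proof -
  define P where "P = (\<Prod>i<k. \<theta> i)"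
  have P0: "0 \<le> P" unfolding P_def using assms(2) by (intro prod_nonneg) auto
  have am: "P powr (1 / card {..<k}) \<le> (\<Sum>i\<in>{..<k}. \<theta> i / card {..<k})"
    unfolding P_def using assms by (intro arith_geom_mean) (auto simp: lessThan_empty_iff)
  have am2: "P powr (1 / k) \<le> (\<Sum>i<k. \<theta> i) / k" using am by (simp add: sum_divide_distrib)
  show ?thesis
  proof (cases "P = 0")
    case True
    have "0 \<le> (\<Sum>i<k. \<theta> i)" using assms(2) by (intro sum_nonneg) auto
    then have "0 \<le> ((\<Sum>i<k. \<theta> i) / k)^k" by simp
    moreover have "(\<Prod>i<k. \<theta> i) = 0" by (simp only: P_def[symmetric] True)
    ultimately show ?thesis by linarith
  next
    case False
    have "P = (P powr (1 / k))^k" using False assms(1) P0 by (simp add: powr_power)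
    also have "\<dots> \<le> ((\<Sum>i<k. \<theta> i) / k)^k" using am2 by (intro power_mono) simp_all
    finally show ?thesis by (simp add: P_def)
  qed
qed

context
  fixes A :: "real^'n^'n" and b x0 :: "real^'n" and \<mu> L :: real
  assumes symA: "transpose A = A"
    and mu_pos: "0 < \<mu>" and muL: "\<mu> \<le> L"
    and lower: "\<And>v. \<mu> * (v \<bullet> v) \<le> v \<bullet> (A *v v)"
    and upper: "\<And>v. v \<bullet> (A *v v) \<le> L * (v \<bullet> v)"
begin

lemma invariants:
  "transpose (Gs A b L x0 k) = Gs A b L x0 k \<and>
   (\<forall>v. v \<bullet> (A *v v) \<le> v \<bullet> (Gs A b L x0 k *v v)) \<and>
   (\<forall>v. v \<bullet> (Gs A b L x0 k *v v) \<le> L * (v \<bullet> v))"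
proof (induction k)
  case 0
  have "transpose (L *\<^sub>R mat 1 :: real^'n^'n) = L *\<^sub>R mat 1"
    by (simp add: transpose_def vec_eq_iff mat_def)
  then show ?case using upper by (simp add: iter_0 scaleR_mat_mult)
next
  case (Suc k)
  then show ?case
    using step[OF symA mu_pos lower, of "Gs A b L x0 k" L "- (matrix_inv (Gs A b L x0 k) *v gs A b L x0 k)"
        "gs A b L x0 k"]
    by (simp add: iter_Suc)
qed

lemma main_ind:
  "\<exists>\<theta>. (\<forall>i<k. 0 \<le> \<theta> i) \<and>
     nuq (Gs A b L x0 k) (gs A b L x0 k) \<le> (\<Prod>i<k. \<theta> i) * nuq (Gs A b L x0 0) (gs A b L x0 0) \<and>
     (\<Sum>i<k. \<theta> i) \<le> L * (trinv (Gs A b L x0 k) - trinv (Gs A b L x0 0))"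
proof (induction k)
  case 0
  show ?case by simp
next
  case (Suc k)
  then obtain \<theta> where th: "\<forall>i<k. 0 \<le> \<theta> i"
    "nuq (Gs A b L x0 k) (gs A b L x0 k) \<le> (\<Prod>i<k. \<theta> i) * nuq (Gs A b L x0 0) (gs A b L x0 0)"
    "(\<Sum>i<k. \<theta> i) \<le> L * (trinv (Gs A b L x0 k) - trinv (Gs A b L x0 0))" by blast
  obtain t where t: "0 \<le> t" "nuq (Gs A b L x0 (Suc k)) (gs A b L x0 (Suc k)) \<le> t * nuq (Gs A b L x0 k) (gs A b L x0 k)"
    "t \<le> L * (trinv (Gs A b L x0 (Suc k)) - trinv (Gs A b L x0 k))"
    using step(5)[OF symA mu_pos lower, of "Gs A b L x0 k" L "- (matrix_inv (Gs A b L x0 k) *v gs A b L x0 k)"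
        "gs A b L x0 k"] invariants[of k]
    by (auto simp add: iter_Suc)
  define \<theta>' where "\<theta>' = \<theta>(k := t)"
  have p: "(\<Prod>i<Suc k. \<theta>' i) = (\<Prod>i<k. \<theta> i) * t" by (simp add: \<theta>'_def)
  have s: "(\<Sum>i<Suc k. \<theta>' i) = (\<Sum>i<k. \<theta> i) + t" by (simp add: \<theta>'_def)
  have pn: "0 \<le> (\<Prod>i<k. \<theta> i)" using th(1) by (intro prod_nonneg) auto
  show ?case
  proof (intro exI[of _ \<theta>'] conjI)
    show "\<forall>i<Suc k. 0 \<le> \<theta>' i" using th(1) t(1) by (simp add: \<theta>'_def less_Suc_eq)
    show "(\<Sum>i<Suc k. \<theta>' i) \<le> L * (trinv (Gs A b L x0 (Suc k)) - trinv (Gs A b L x0 0))"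
      using s th(3) t(3) by (simp add: algebra_simps)
    have "nuq (Gs A b L x0 (Suc k)) (gs A b L x0 (Suc k)) \<le> t * ((\<Prod>i<k. \<theta> i) * nuq (Gs A b L x0 0) (gs A b L x0 0))"
      using t(2) mult_left_mono[OF th(2) t(1)] by linarith
    then show "nuq (Gs A b L x0 (Suc k)) (gs A b L x0 (Suc k)) \<le> (\<Prod>i<Suc k. \<theta>' i) * nuq (Gs A b L x0 0) (gs A b L x0 0)"
      unfolding p by (simp add: mult.commute mult.left_commute)
  qed
qed

lemma invG: "invertible (Gs A b L x0 k)"
proof (rule pd_invertible)
  fix v :: "real^'n" assume "v \<noteq> 0"
  then have "0 < \<mu> * (v \<bullet> v)" using mu_pos by simp
  also have "\<dots> \<le> v \<bullet> (Gs A b L x0 k *v v)"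
  proof -
    have "v \<bullet> (A *v v) \<le> v \<bullet> (Gs A b L x0 k *v v)" using invariants[of k] by blast
    then show ?thesis using lower[of v] by linarith
  qed
  finally show "0 < v \<bullet> (Gs A b L x0 k *v v)" .
qed

lemma invA: "invertible A"
proof (rule pd_invertible)
  fix v :: "real^'n" assume "v \<noteq> 0"
  then have "0 < \<mu> * (v \<bullet> v)" using mu_pos by simp
  also have "\<dots> \<le> v \<bullet> (A *v v)" using lower[of v] by simp
  finally show "0 < v \<bullet> (A *v v)" .
qed

lemma zero_persist: "gs A b L x0 k = 0 \<Longrightarrow> gs A b L x0 (Suc k) = 0"
  by (simp add: iter_Suc mvneg)

lemma rank_ind: "gs A b L x0 k = 0 \<or> k \<le> dim {x. (Gs A b L x0 k - A) *v x = 0}"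
proof (induction k)
  case 0 then show ?case by simp
next
  case (Suc k)
  show ?case
  proof (cases "gs A b L x0 (Suc k) = 0")
    case True then show ?thesis by simp
  next
    case False
    then have gk: "gs A b L x0 k \<noteq> 0" using zero_persist by blast
    then have IH: "k \<le> dim {x. (Gs A b L x0 k - A) *v x = 0}" using Suc by simp
    define u where "u = - (matrix_inv (Gs A b L x0 k) *v gs A b L x0 k)"
    note st = step[OF symA mu_pos lower, of "Gs A b L x0 k" L u "gs A b L x0 k" "Gs A b L x0 (Suc k)"]
    have inv: "transpose (Gs A b L x0 k) = Gs A b L x0 k"
      "\<And>v. v \<bullet> (A *v v) \<le> v \<bullet> (Gs A b L x0 k *v v)" "\<And>v. v \<bullet> (Gs A b L x0 k *v v) \<le> L * (v \<bullet> v)"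
      using invariants[of k] by auto
    have G1: "Gs A b L x0 (Suc k) = SR1 A (Gs A b L x0 k) u" by (simp add: iter_Suc u_def)
    have g1: "gs A b L x0 (Suc k) = gs A b L x0 k + A *v u" by (simp add: iter_Suc u_def)
    define K where "K = {x. (Gs A b L x0 k - A) *v x = 0}"
    define K' where "K' = {x. (Gs A b L x0 (Suc k) - A) *v x = 0}"
    have sub: "subspace K" unfolding subspace_def K_def
      by (simp add: algebra_simps matrix_vector_mult_scaleR)
    have uK: "u \<notin> K" using st(4)[OF inv u_def G1] False g1 by (auto simp: K_def)
    have "insert u K \<subseteq> K'" using st(6,7)[OF inv u_def G1] by (auto simp: K_def K'_def)
    then have "dim (insert u K) \<le> dim K'" by (rule dim_subset)
    moreover have "dim (insert u K) = dim K + 1"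
      using uK sub by (simp add: dim_insert span_eq_iff[THEN iffD2])
    ultimately show ?thesis using IH by (simp add: K_def K'_def)
  qed
qed

lemma finite_term: "CARD('n) < k \<Longrightarrow> gs A b L x0 k = 0"
proof (induction k)
  case 0 then show ?case by simp
next
  case (Suc k)
  show ?case
  proof (cases "CARD('n) < k")
    case True then show ?thesis using Suc zero_persist by blast
  next
    case False
    then have kn: "k = CARD('n)" using Suc.prems by simp
    show ?thesis
    proof (cases "gs A b L x0 k = 0")
      case True then show ?thesis using zero_persist by blast
    next
      case False
      define K where "K = {x. (Gs A b L x0 k - A) *v x = 0}"
      have sub: "subspace K" unfolding subspace_def K_def
        by (simp add: algebra_simps matrix_vector_mult_scaleR)
      have "k \<le> dim K" using rank_ind[of k] False by (simp add: K_def)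
      moreover have "dim K \<le> DIM(real^'n)" by (rule dim_subset_UNIV)
      ultimately have "dim K = DIM(real^'n)" using kn by simp
      then have "span K = UNIV" by (rule dim_eq_full[THEN iffD1])
      then have KU: "K = UNIV" using sub by (simp add: span_eq_iff[THEN iffD2])
      define u where "u = - (matrix_inv (Gs A b L x0 k) *v gs A b L x0 k)"
      have inv: "transpose (Gs A b L x0 k) = Gs A b L x0 k"
        "\<And>v. v \<bullet> (A *v v) \<le> v \<bullet> (Gs A b L x0 k *v v)" "\<And>v. v \<bullet> (Gs A b L x0 k *v v) \<le> L * (v \<bullet> v)"
        using invariants[of k] by auto
      have g1: "gs A b L x0 (Suc k) = gs A b L x0 k + A *v u" by (simp add: iter_Suc u_def)
      have "(Gs A b L x0 k - A) *v u = 0" using KU by (auto simp: K_def)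
      then show ?thesis using step(4)[OF symA mu_pos lower inv u_def refl] g1 by simp
    qed
  qed
qed

lemma L_pos: "0 < L" using mu_pos muL by simp

lemma Gpsd: "0 \<le> v \<bullet> (Gs A b L x0 k *v v)"
proof -
  have "v \<bullet> (A *v v) \<le> v \<bullet> (Gs A b L x0 k *v v)" using invariants[of k] by blast
  moreover have "0 \<le> \<mu> * (v \<bullet> v)" using mu_pos by simp
  ultimately show ?thesis using lower[of v] by linarith
qed

lemma Glow: "\<mu> * (v \<bullet> v) \<le> v \<bullet> (Gs A b L x0 k *v v)"
proof -
  have "v \<bullet> (A *v v) \<le> v \<bullet> (Gs A b L x0 k *v v)" using invariants[of k] by blast
  then show ?thesis using lower[of v] by linarith
qed

lemma trinv_le: "trinv (Gs A b L x0 k) \<le> CARD('n) / \<mu>"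
proof -
  have "trinv (Gs A b L x0 k) \<le> (\<Sum>j\<in>(UNIV::'n set). 1 / \<mu>)"
    unfolding trinv_def
  proof (rule sum_mono)
    fix j :: 'n
    show "axis j 1 \<bullet> (matrix_inv (Gs A b L x0 k) *v axis j 1) \<le> 1 / \<mu>"
      using inv_quad_bound[OF invG mu_pos Glow, of "axis j 1"] by (simp add: inner_axis_axis)
  qed
  then show ?thesis by simp
qed

lemma inv0: "matrix_inv (Gs A b L x0 0) *v y = (1 / L) *\<^sub>R y"
proof -
  have "Gs A b L x0 0 *v ((1 / L) *\<^sub>R y) = y" using L_pos
    by (simp add: iter_0 scaleR_mat_mult matrix_vector_mult_scaleR)
  then show ?thesis using inv_props(2)[OF invG[of 0], of "(1 / L) *\<^sub>R y"] by simp
qed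

lemma trinv0: "trinv (Gs A b L x0 0) = CARD('n) / L"
  by (simp add: trinv_def inv0 inner_axis_axis)

lemma nu0: "nuq (Gs A b L x0 0) g = (g \<bullet> g) / L"
  by (simp add: nuq_def inv0)

lemma nu0_le: "(g \<bullet> g) / L \<le> g \<bullet> (matrix_inv A *v g)"
proof -
  define h where "h = matrix_inv A *v g"
  have Ah: "A *v h = g" using inv_props[OF invA] h_def by simp
  have psdA: "0 \<le> v \<bullet> (A *v v)" for v
    using lower[of v] mu_pos by (smt (verit) inner_ge_zero mult_nonneg_nonneg)
  have "g \<bullet> g \<le> L * (h \<bullet> g)" using sq_bound[OF symA psdA upper less_imp_le[OF L_pos], of h] Ah by simp
  then show ?thesis using L_pos by (simp add: h_def divide_le_eq inner_commute mult.commute)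
qed

lemma lam_le: "g \<bullet> (matrix_inv A *v g) \<le> (L / \<mu>) * nuq (Gs A b L x0 k) g"
proof -
  define G where "G = Gs A b L x0 k"
  define h where "h = matrix_inv G *v g"
  have Gh: "G *v h = g" using inv_props[OF invG] h_def G_def by simp
  have symG: "transpose G = G" using invariants[of k] G_def by blast
  have up: "v \<bullet> (G *v v) \<le> L * (v \<bullet> v)" for v using invariants[of k] G_def by blast
  have "g \<bullet> g \<le> L * (h \<bullet> g)" using sq_bound[OF symG _ up less_imp_le[OF L_pos], of h] Gh Gpsd G_def by simp
  moreover have "g \<bullet> (matrix_inv A *v g) \<le> (g \<bullet> g) / \<mu>" by (rule inv_quad_bound[OF invA mu_pos lower])
  moreover have "nuq G g = h \<bullet> g" by (simp add: nuq_def h_def inner_commute)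
  ultimately have "g \<bullet> (matrix_inv A *v g) \<le> (L * nuq G g) / \<mu>"
    using mu_pos by (smt (verit) divide_right_mono)
  then show ?thesis by (simp add: G_def)
qed

lemma powr_half_k:
  fixes x :: real assumes "0 \<le> x" "1 \<le> k"
  shows "sqrt (x ^ k) = x powr (real k / 2)"
proof (cases "x = 0")
  case True then show ?thesis using assms by simp
next
  case False
  then have xp: "0 < x" using assms by simp
  have "(x powr (real k / 2))^2 = x powr (real k / 2) * x powr (real k / 2)" by (simp add: power2_eq_square)
  also have "\<dots> = x powr (real k)" by (simp add: powr_add[symmetric])
  also have "\<dots> = x ^ k" using xp by (simp add: powr_realpow)
  finally show ?thesis by (metis powr_ge_zero real_sqrt_abs abs_of_nonneg)
qed

lemma final_bound:
  assumes k1: "1 \<le> k"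
  shows "lambda_f A b (xs A b L x0 k)
    \<le> (exp (real CARD('n) / real k * ln (L / \<mu>)) - 1) powr (real k / 2)
       * sqrt (L / \<mu>) * lambda_f A b x0"
proof -
  define n where "n = CARD('n)"
  define \<rho> where "\<rho> = L / \<mu>"
  define E where "E = exp (real n / real k * ln \<rho>)"
  have rho1: "1 \<le> \<rho>" using mu_pos muL by (simp add: \<rho>_def)
  have E1: "1 \<le> E" using rho1 by (simp add: E_def)
  define gk where "gk = gs A b L x0 k"
  define g0 where "g0 = gs A b L x0 0"
  define Lk where "Lk = gk \<bullet> (matrix_inv A *v gk)"
  define L0 where "L0 = g0 \<bullet> (matrix_inv A *v g0)"
  have L00: "0 \<le> L0" using nu0_le[of g0] L_pos unfolding L0_def
    by (smt (verit) divide_nonneg_pos inner_ge_zero)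
  have lamk: "lambda_f A b (xs A b L x0 k) = sqrt Lk" by (simp add: lambda_f_def Lk_def gk_def gs_def)
  have lam0: "lambda_f A b x0 = sqrt L0" by (simp add: lambda_f_def L0_def g0_def gs_def iter_0)
  have key: "Lk \<le> (E - 1)^k * \<rho> * L0"
  proof (cases "n < k")
    case True
    then have "gk = 0" using finite_term by (simp add: gk_def n_def)
    then have "Lk = 0" by (simp add: Lk_def)
    moreover have "0 \<le> (E - 1)^k * \<rho> * L0" using E1 rho1 L00 by simp
    ultimately show ?thesis by simp
  next
    case False
    then have kn: "k \<le> n" by simp
    obtain \<theta> where th: "\<forall>i<k. 0 \<le> \<theta> i"
      "nuq (Gs A b L x0 k) gk \<le> (\<Prod>i<k. \<theta> i) * nuq (Gs A b L x0 0) g0"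
      "(\<Sum>i<k. \<theta> i) \<le> L * (trinv (Gs A b L x0 k) - trinv (Gs A b L x0 0))"
      using main_ind[of k] unfolding gk_def g0_def by blast
    define P where "P = (\<Prod>i<k. \<theta> i)"
    define S where "S = (\<Sum>i<k. \<theta> i)"
    have S0: "0 \<le> S" unfolding S_def using th(1) by (intro sum_nonneg) auto
    have P0: "0 \<le> P" unfolding P_def using th(1) by (intro prod_nonneg) auto
    have "S \<le> L * (n / \<mu> - n / L)" using th(3) trinv_le[of k] trinv0 L_pos
      unfolding S_def n_def by (smt (verit) mult_left_mono)
    also have "\<dots> = n * (\<rho> - 1)" using L_pos mu_pos by (simp add: \<rho>_def field_simps)
    finally have Sle: "S \<le> n * (\<rho> - 1)" .
    have kpos: "0 < real k" using k1 by simp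
    have "S / k \<le> (n / k) * (\<rho> - 1)" using Sle kpos by (simp add: divide_right_mono)
    also have "\<dots> \<le> \<rho> powr (n / k) - 1"
      using bernoulli_powr[of \<rho> "n / k"] rho1 kn kpos by simp
    also have "\<rho> powr (n / k) = E" using rho1 by (simp add: powr_def E_def)
    finally have SE: "S / k \<le> E - 1" .
    have "P \<le> (S / k)^k" unfolding P_def S_def using amgm_pow[OF k1] th(1) by blast
    also have "\<dots> \<le> (E - 1)^k" using SE S0 kpos by (intro power_mono) simp_all
    finally have PE: "P \<le> (E - 1)^k" .
    have "Lk \<le> \<rho> * nuq (Gs A b L x0 k) gk" using lam_le[of gk k] by (simp add: Lk_def \<rho>_def)
    also have "\<dots> \<le> \<rho> * (P * nuq (Gs A b L x0 0) g0)" using th(2) rho1 by (simp add: P_def)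
    also have "nuq (Gs A b L x0 0) g0 \<le> L0" using nu0 nu0_le L0_def by simp
    then have "\<rho> * (P * nuq (Gs A b L x0 0) g0) \<le> \<rho> * (P * L0)"
      using rho1 P0 by (simp add: mult_left_mono)
    also have "\<rho> * (P * L0) \<le> \<rho> * ((E - 1)^k * L0)"
      using rho1 L00 PE by (simp add: mult_left_mono mult_right_mono)
    finally show ?thesis by (simp add: mult_ac)
  qed
  have "sqrt Lk \<le> sqrt ((E - 1)^k * \<rho> * L0)" using key by simp
  also have "\<dots> = sqrt ((E - 1)^k) * sqrt \<rho> * sqrt L0" by (simp add: real_sqrt_mult)
  also have "sqrt ((E - 1)^k) = (E - 1) powr (real k / 2)" using E1 k1 by (simp add: powr_half_k)
  finally show ?thesis using lamk lam0 by (simp add: E_def n_def \<rho>_def)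
qed

end


theorem theorem2:
  fixes A :: "real^'n^'n" and b x0 :: "real^'n" and \<mu> L :: real and k :: nat
  assumes symA: "transpose A = A"
    and mu_pos: "0 < \<mu>" and muL: "\<mu> \<le> L"
    and lower: "\<And>v. \<mu> * (v \<bullet> v) \<le> v \<bullet> (A *v v)"
    and upper: "\<And>v. v \<bullet> (A *v v) \<le> L * (v \<bullet> v)"
    and k1: "k \<ge> 1"
  shows "lambda_f A b (fst (sr1_iter A b L x0 k))
    \<le> (exp (real CARD('n) / real k * ln (L / \<mu>)) - 1) powr (real k / 2)
       * sqrt (L / \<mu>) * lambda_f A b x0"
  using final_bound[OF symA mu_pos muL lower upper k1, of b x0] by (simp add: xs_def)

end
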